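(* Let $m \ge 1$ be odd, $n\ge1$ with $\gcd(m,4n)=1$, and $r \in \mathbb{Z}$ with $r^{4n}\equiv 1 \bmod m$. Let $G = \langle u,v \mid u^m = v^{4n} = 1,\ vuv^{-1} = u^r\rangle$. Then for $a \ge 2$, $G$ has a quotient isomorphic to $Q_{4a}$ if and only if $a \mid m$ and $r \equiv -1 \bmod a$.
   Context: $Q_{4a} = \langle x,y\mid x^a=y^2, yxy^{-1}=x^{-1}\rangle$ is the generalised quaternion group of order $4a$. *)

theory Defs
  imports "HOL-Algebra.Algebra" "HOL-Number_Theory.Cong"
begin

text \<open>A word is a list of letters (g, e) where e = False
means the generator g and e = True means its inverse.\<close>

type_synonym 'g word = "('g \<times> bool) list"

inductive_set pres_cong :: "('g word \<times> 'g word) set \<Rightarrow> ('g word \<times> 'g word) set"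
  for R :: "('g word \<times> 'g word) set" where
  refl: "(w, w) \<in> pres_cong R"
| sym: "(w, w') \<in> pres_cong R \<Longrightarrow> (w', w) \<in> pres_cong R"
| trans: "(w, w') \<in> pres_cong R \<Longrightarrow> (w', w'') \<in> pres_cong R \<Longrightarrow> (w, w'') \<in> pres_cong R"
| ctxt: "(w, w') \<in> pres_cong R \<Longrightarrow> (p @ w @ q, p @ w' @ q) \<in> pres_cong R"
| cancel: "([(g, e), (g, \<not> e)], []) \<in> pres_cong R"
| rel: "(l, r) \<in> R \<Longrightarrow> (l, r) \<in> pres_cong R"

definition presented_group :: "('g word \<times> 'g word) set \<Rightarrow> 'g word set monoid" where
  "presented_group R =
    \<lparr> carrier = UNIV // pres_cong R,
      monoid.mult = (\<lambda>A B. \<Union>a\<in>A. \<Union>b\<in>B. pres_cong R `` {a @ b}),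
      monoid.one = pres_cong R `` {[]} \<rparr>"

definition wpow :: "'g \<Rightarrow> int \<Rightarrow> 'g word" where
  "wpow g k = (if 0 \<le> k then replicate (nat k) (g, False) else replicate (nat (- k)) (g, True))"

datatype gen2 = Gen1 | Gen2

definition G_group :: "nat \<Rightarrow> nat \<Rightarrow> int \<Rightarrow> gen2 word set monoid" where
  "G_group m n r = presented_group
     { (wpow Gen1 (int m), []),
       (wpow Gen2 (int (4 * n)), []),
       ([(Gen2, False), (Gen1, False), (Gen2, True)], wpow Gen1 r) }"

text \<open>Generalised quaternion group Q_{4a} = \<langle>x, y | x^a = y^2, y x y^-1 = x^-1\<rangle>
with x = Gen1, y = Gen2.\<close>
definition Q_group :: "nat \<Rightarrow> gen2 word set monoid" where
  "Q_group a = presented_group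
     { (wpow Gen1 (int a), wpow Gen2 2),
       ([(Gen2, False), (Gen1, False), (Gen2, True)], wpow Gen1 (-1)) }"

end

theory Submission
  imports Defs
begin

abbreviation cls :: "('g word \<times> 'g word) set \<Rightarrow> 'g word \<Rightarrow> 'g word set" where
  "cls R w \<equiv> pres_cong R `` {w}"

lemma pc_equiv: "equiv UNIV (pres_cong R)"
  unfolding equiv_def refl_on_def sym_def trans_def
  by (auto intro: pres_cong.refl pres_cong.sym pres_cong.trans)

lemma pc_app: "(w, w') \<in> pres_cong R \<Longrightarrow> (z, z') \<in> pres_cong R \<Longrightarrow> (w @ z, w' @ z') \<in> pres_cong R"
proof -
  assume a: "(w, w') \<in> pres_cong R" and b: "(z, z') \<in> pres_cong R"
  have "([] @ w @ z, [] @ w' @ z) \<in> pres_cong R" by (rule pres_cong.ctxt[OF a])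
  moreover have "(w' @ z @ [], w' @ z' @ []) \<in> pres_cong R" by (rule pres_cong.ctxt[OF b])
  ultimately show ?thesis by (auto intro: pres_cong.trans)
qed

lemma cls_eq_iff: "cls R w = cls R w' \<longleftrightarrow> (w, w') \<in> pres_cong R"
  using eq_equiv_class_iff[OF pc_equiv] by auto

lemma cls_mult: "cls R w \<otimes>\<^bsub>presented_group R\<^esub> cls R z = cls R (w @ z)"
proof -
  have "(\<Union>a\<in>cls R w. \<Union>b\<in>cls R z. cls R (a @ b)) = cls R (w @ z)"
  proof -
    have "cls R (a @ b) = cls R (w @ z)" if "a \<in> cls R w" "b \<in> cls R z" for a b
      using that by (simp add: cls_eq_iff pc_app pres_cong.sym)
    moreover have "w \<in> cls R w" "z \<in> cls R z" by (auto intro: pres_cong.refl)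
    ultimately show ?thesis by blast
  qed
  then show ?thesis by (simp add: presented_group_def)
qed

lemma carrier_pg: "carrier (presented_group R) = range (cls R)"
  by (auto simp: presented_group_def quotient_def)

lemma one_pg: "\<one>\<^bsub>presented_group R\<^esub> = cls R []"
  by (simp add: presented_group_def)

definition winv :: "'g word \<Rightarrow> 'g word" where
  "winv w = rev (map (\<lambda>(g, e). (g, \<not> e)) w)"

lemma winv_cancel: "(winv w @ w, []) \<in> pres_cong R"
proof (induction w)
  case Nil then show ?case by (simp add: winv_def pres_cong.refl)
next
  case (Cons x w)
  obtain g e where x: "x = (g, e)" by force
  have "winv (x # w) @ x # w = winv w @ ([(g, \<not> e), (g, \<not> \<not> e)]) @ w"
    by (simp add: winv_def x)
  moreover have "(winv w @ ([(g, \<not> e), (g, \<not> \<not> e)]) @ w, winv w @ [] @ w) \<in> pres_cong R"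
    by (rule pres_cong.ctxt[OF pres_cong.cancel])
  ultimately show ?case using Cons by (auto intro: pres_cong.trans)
qed

lemma pg_group: "group (presented_group R)"
proof (rule groupI)
  fix x y assume "x \<in> carrier (presented_group R)" "y \<in> carrier (presented_group R)"
  then show "x \<otimes>\<^bsub>presented_group R\<^esub> y \<in> carrier (presented_group R)"
    by (auto simp: carrier_pg cls_mult)
next
  show "\<one>\<^bsub>presented_group R\<^esub> \<in> carrier (presented_group R)" by (simp add: carrier_pg one_pg)
next
  fix x y z assume "x \<in> carrier (presented_group R)" "y \<in> carrier (presented_group R)"
    "z \<in> carrier (presented_group R)"
  then show "x \<otimes>\<^bsub>presented_group R\<^esub> y \<otimes>\<^bsub>presented_group R\<^esub> z =
     x \<otimes>\<^bsub>presented_group R\<^esub> (y \<otimes>\<^bsub>presented_group R\<^esub> z)"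
    by (auto simp: carrier_pg cls_mult)
next
  fix x assume "x \<in> carrier (presented_group R)"
  then show "\<one>\<^bsub>presented_group R\<^esub> \<otimes>\<^bsub>presented_group R\<^esub> x = x"
    by (auto simp: carrier_pg cls_mult one_pg)
next
  fix x assume "x \<in> carrier (presented_group R)"
  then obtain w where w: "x = cls R w" by (auto simp: carrier_pg)
  show "\<exists>y\<in>carrier (presented_group R). y \<otimes>\<^bsub>presented_group R\<^esub> x = \<one>\<^bsub>presented_group R\<^esub>"
    by (rule bexI[of _ "cls R (winv w)"]) (auto simp: w cls_mult one_pg cls_eq_iff winv_cancel carrier_pg)
qed

lemma cls_rel: "(l, r) \<in> R \<Longrightarrow> cls R l = cls R r"
  by (simp add: cls_eq_iff pres_cong.rel)

lemma cls_Cons: "cls R (x # w) = cls R [x] \<otimes>\<^bsub>presented_group R\<^esub> cls R w"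
  by (simp add: cls_mult)

lemma cls_inv: "inv\<^bsub>presented_group R\<^esub> (cls R [(g, e)]) = cls R [(g, \<not> e)]"
proof -
  interpret group "presented_group R" by (rule pg_group)
  show ?thesis
    by (rule inv_equality) (auto simp: cls_mult one_pg cls_eq_iff carrier_pg
      intro: pres_cong.cancel[of g "\<not> e", simplified])
qed

fun evalw :: "('h, 'm) monoid_scheme \<Rightarrow> ('g \<Rightarrow> 'h) \<Rightarrow> 'g word \<Rightarrow> 'h" where
  "evalw H f [] = \<one>\<^bsub>H\<^esub>"
| "evalw H f ((g, e) # w) = (if e then inv\<^bsub>H\<^esub> (f g) else f g) \<otimes>\<^bsub>H\<^esub> evalw H f w"

context group
begin

lemma evalw_closed: "\<forall>g. f g \<in> carrier G \<Longrightarrow> evalw G f w \<in> carrier G"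
  by (induction w) auto

lemma evalw_append: "\<forall>g. f g \<in> carrier G \<Longrightarrow> evalw G f (w @ z) = evalw G f w \<otimes> evalw G f z"
  by (induction w) (auto simp: evalw_closed m_assoc)

lemma evalw_cong:
  assumes f: "\<forall>g. f g \<in> carrier G" and R: "\<And>l r. (l, r) \<in> R \<Longrightarrow> evalw G f l = evalw G f r"
    and p: "(w, w') \<in> pres_cong R"
  shows "evalw G f w = evalw G f w'"
  using p
proof (induction rule: pres_cong.induct)
  case (ctxt w w' p q)
  then show ?case using f by (simp add: evalw_append)
next
  case (cancel g e)
  have "f g \<in> carrier G" using f by auto
  then show ?case by auto
qed (auto simp: R)

lemma evalw_wpow: "\<forall>g. f g \<in> carrier G \<Longrightarrow> evalw G f (wpow g k) = f g [^] k"
proof -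
  assume f: "\<forall>g. f g \<in> carrier G"
  then have fg: "f g \<in> carrier G" by auto
  have 1: "evalw G f (replicate n (g, False)) = f g [^] n" for n
    using fg by (induction n) (auto, metis nat_pow_Suc nat_pow_Suc2)
  have 2: "evalw G f (replicate n (g, True)) = inv (f g) [^] n" for n
  proof (induction n)
    case 0 show ?case by simp
  next
    case (Suc n)
    have "evalw G f (replicate (Suc n) (g, True)) = inv (f g) \<otimes> inv (f g) [^] n"
      using Suc.IH by simp
    also have "\<dots> = inv (f g) [^] Suc n"
      using fg by (simp only: nat_pow_Suc2 inv_closed)
    finally show ?case .
  qed
  show ?thesis
  proof (cases "0 \<le> k")
    case True
    then show ?thesis unfolding wpow_def int_pow_def2 using 1 by simp
  next
    case False
    then show ?thesis unfolding wpow_def int_pow_def2 using 2 nat_pow_inv[OF fg] by simp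
  qed
qed

end

definition uhom :: "('g word \<times> 'g word) set \<Rightarrow> ('h, 'm) monoid_scheme \<Rightarrow> ('g \<Rightarrow> 'h) \<Rightarrow> 'g word set \<Rightarrow> 'h" where
  "uhom RR HH ff XX = the_elem (evalw HH ff ` XX)"

lemma uhom_cls:
  assumes "group H" "\<forall>g. f g \<in> carrier H" "\<And>l r. (l, r) \<in> R \<Longrightarrow> evalw H f l = evalw H f r"
  shows "uhom R H f (cls R w) = evalw H f w"
proof -
  have "evalw H f ` cls R w = {evalw H f w}"
  proof
    show "evalw H f ` cls R w \<subseteq> {evalw H f w}"
      using group.evalw_cong[OF assms] by (auto intro: pres_cong.sym)
    show "{evalw H f w} \<subseteq> evalw H f ` cls R w" by (auto intro: pres_cong.refl)
  qed
  then show ?thesis by (simp add: uhom_def)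
qed

lemma uhom_hom:
  assumes "group H" "\<forall>g. f g \<in> carrier H" "\<And>l r. (l, r) \<in> R \<Longrightarrow> evalw H f l = evalw H f r"
  shows "uhom R H f \<in> hom (presented_group R) H"
proof (rule homI)
  fix x assume "x \<in> carrier (presented_group R)"
  then obtain w where w: "x = cls R w" by (auto simp: carrier_pg)
  show "uhom R H f x \<in> carrier H"
    using group.evalw_closed[OF assms(1,2)] by (simp add: w uhom_cls[OF assms])
next
  fix x y assume "x \<in> carrier (presented_group R)" "y \<in> carrier (presented_group R)"
  then obtain w z where w: "x = cls R w" and z: "y = cls R z" by (auto simp: carrier_pg)
  show "uhom R H f (x \<otimes>\<^bsub>presented_group R\<^esub> y) = uhom R H f x \<otimes>\<^bsub>H\<^esub> uhom R H f y"
    using group.evalw_append[OF assms(1,2)] by (simp add: w z cls_mult uhom_cls[OF assms])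
qed

lemma hom_cls:
  assumes "group H" "h \<in> hom (presented_group R) H"
  shows "h (cls R w) = evalw H (\<lambda>g. h (cls R [(g, False)])) w"
proof -
  interpret gh: group_hom "presented_group R" H h
    using assms pg_group by (simp add: group_hom_def group_hom_axioms_def)
  show ?thesis
  proof (induction w)
    case Nil
    show ?case using gh.hom_one by (simp add: one_pg[symmetric])
  next
    case (Cons x w)
    obtain g e where x: "x = (g, e)" by force
    have c1: "cls R [(g, e)] \<in> carrier (presented_group R)" "cls R w \<in> carrier (presented_group R)"
      "cls R [(g, False)] \<in> carrier (presented_group R)"
      by (simp_all add: carrier_pg)
    have 1: "h (cls R ((g, e) # w)) = h (cls R [(g, e)]) \<otimes>\<^bsub>H\<^esub> h (cls R w)"
      using cls_Cons[of R "(g, e)" w] gh.hom_mult[OF c1(1,2)] by metis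
    have 2: "h (cls R [(g, e)]) = (if e then inv\<^bsub>H\<^esub> h (cls R [(g, False)]) else h (cls R [(g, False)]))"
    proof (cases e)
      case True
      have "cls R [(g, e)] = inv\<^bsub>presented_group R\<^esub> (cls R [(g, False)])"
        using cls_inv[of R g False] True by simp
      then show ?thesis using gh.hom_inv[OF c1(3)] True by metis
    qed simp
    have "h (cls R ((g, e) # w)) = evalw H (\<lambda>g. h (cls R [(g, False)])) ((g, e) # w)"
      unfolding 1 2 evalw.simps Cons.IH ..
    then show ?case unfolding x .
  qed
qed

lemma hom_wpow:
  assumes "group H" "h \<in> hom (presented_group R) H"
  shows "h (cls R (wpow g k)) = h (cls R [(g, False)]) [^]\<^bsub>H\<^esub> k"
proof -
  have "\<forall>g. h (cls R [(g, False)]) \<in> carrier H"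
    using assms(2) by (auto simp: hom_def carrier_pg)
  note e = group.evalw_wpow[OF assms(1) this, of g k]
  show ?thesis by (rule HOL.trans[OF hom_cls[OF assms, of "wpow g k"] e])
qed

lemma pg_generated:
  assumes "subgroup S (presented_group R)" "\<And>g. cls R [(g, False)] \<in> S"
  shows "cls R w \<in> S"
proof (induction w)
  case Nil then show ?case using assms(1) subgroup.one_closed one_pg by metis
next
  case (Cons x w)
  obtain g e where x: "x = (g, e)" by force
  have "cls R [(g, True)] \<in> S"
    using subgroup.m_inv_closed[OF assms(1) assms(2)[of g]] cls_inv[of R g False] by simp
  then have "cls R [(g, e)] \<in> S" using assms(2) by (cases e) auto
  then show ?case using Cons subgroup.m_closed[OF assms(1)] by (simp add: x cls_Cons[of R _ w])
qed

context group
begin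

lemma conj_hom: "Ye \<in> carrier G \<Longrightarrow> (\<lambda>z. Ye \<otimes> z \<otimes> inv Ye) \<in> hom G G"
proof (rule homI)
  fix x y assume Ye: "Ye \<in> carrier G" and x: "x \<in> carrier G" and y: "y \<in> carrier G"
  have "Ye \<otimes> x \<otimes> inv Ye \<otimes> (Ye \<otimes> y \<otimes> inv Ye) = Ye \<otimes> x \<otimes> (inv Ye \<otimes> Ye) \<otimes> y \<otimes> inv Ye"
    using Ye x y by (simp only: m_assoc inv_closed m_closed)
  also have "\<dots> = Ye \<otimes> (x \<otimes> y) \<otimes> inv Ye" using Ye x y by (simp add: m_assoc)
  finally show "Ye \<otimes> (x \<otimes> y) \<otimes> inv Ye = Ye \<otimes> x \<otimes> inv Ye \<otimes> (Ye \<otimes> y \<otimes> inv Ye)" by simp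
qed simp

lemma qrels:
  assumes Xe: "Xe \<in> carrier G" and Ye: "Ye \<in> carrier G"
    and r1: "Xe [^] (int a) = Ye [^] (2::int)" and r2: "Ye \<otimes> Xe \<otimes> inv Ye = inv Xe"
  shows "\<And>k::int. Ye \<otimes> Xe [^] k \<otimes> inv Ye = Xe [^] (-k)"
    and "Xe [^] (2 * int a) = \<one>" and "Ye [^] (4::int) = \<one>"
proof -
  show cj: "Ye \<otimes> Xe [^] k \<otimes> inv Ye = Xe [^] (-k)" for k :: int
  proof -
    have "Ye \<otimes> Xe [^] k \<otimes> inv Ye = (Ye \<otimes> Xe \<otimes> inv Ye) [^] k"
      using hom_int_pow[OF conj_hom[OF Ye] Xe is_group is_group, of k] by (simp only:)
    also have "\<dots> = inv Xe [^] k" by (simp only: r2)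
    also have "\<dots> = Xe [^] (-k)" by (simp only: int_pow_inv[OF Xe] int_pow_neg[OF Xe])
    finally show ?thesis .
  qed
  have c1: "Ye \<otimes> Ye [^] (2::int) = Ye [^] (1 + 2 :: int)"
    by (simp only: int_pow_mult[OF Ye] int_pow_1[OF Ye])
  have c2: "Ye [^] (2::int) \<otimes> Ye = Ye [^] (2 + 1 :: int)"
    by (simp only: int_pow_mult[OF Ye] int_pow_1[OF Ye])
  have c3: "(1 + 2 :: int) = 2 + 1" by simp
  have "Ye \<otimes> Ye [^] (2::int) \<otimes> inv Ye = Ye [^] (2::int) \<otimes> Ye \<otimes> inv Ye"
    using c1 c2 c3 by metis
  also have "\<dots> = Ye [^] (2::int) \<otimes> (Ye \<otimes> inv Ye)"
    by (rule m_assoc) (simp_all add: Ye)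
  also have "\<dots> = Ye [^] (2::int)" using Ye by simp
  finally have c4: "Ye \<otimes> Ye [^] (2::int) \<otimes> inv Ye = Ye [^] (2::int)" .
  have e: "Xe [^] (- int a) = Xe [^] (int a)"
    using cj[of "int a"] c4 unfolding r1 by metis
  have x2: "Xe [^] (2 * int a) = \<one>"
  proof -
    have "Xe [^] (2 * int a) = Xe [^] (int a + int a)" by (simp only: mult_2)
    also have "\<dots> = Xe [^] (int a) \<otimes> Xe [^] (- int a)" by (simp only: int_pow_mult[OF Xe] e)
    also have "\<dots> = Xe [^] (int a + - int a)" by (simp only: int_pow_mult[OF Xe])
    also have "\<dots> = \<one>" by simp
    finally show ?thesis .
  qed
  then show "Xe [^] (2 * int a) = \<one>" .
  have "Ye [^] (4::int) = Ye [^] (2 + 2::int)" by simp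
  also have "\<dots> = Ye [^] (2::int) \<otimes> Ye [^] (2::int)" by (simp only: int_pow_mult[OF Ye])
  also have "\<dots> = Xe [^] (int a + int a)" by (simp only: r1[symmetric] int_pow_mult[OF Xe])
  also have "\<dots> = \<one>" using x2 by (simp only: mult_2)
  finally show "Ye [^] (4::int) = \<one>" .
qed

lemma pow_period:
  assumes Xe: "Xe \<in> carrier G" and p: "Xe [^] (p::int) = \<one>" and d: "p dvd k - l"
  shows "Xe [^] k = Xe [^] l"
proof -
  obtain t where t: "k = l + p * t" using d by (metis add_diff_cancel_left' diff_add_cancel dvd_def)
  have "Xe [^] k = Xe [^] l \<otimes> (Xe [^] p) [^] t" using Xe by (simp add: t int_pow_mult int_pow_pow)
  then show ?thesis using p Xe by simp
qed

end

definition RG :: "nat \<Rightarrow> nat \<Rightarrow> int \<Rightarrow> (gen2 word \<times> gen2 word) set" where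
  "RG m n r = { (wpow Gen1 (int m), []),
       (wpow Gen2 (int (4 * n)), []),
       ([(Gen2, False), (Gen1, False), (Gen2, True)], wpow Gen1 r) }"

definition RQ :: "nat \<Rightarrow> (gen2 word \<times> gen2 word) set" where
  "RQ a = { (wpow Gen1 (int a), wpow Gen2 2),
       ([(Gen2, False), (Gen1, False), (Gen2, True)], wpow Gen1 (-1)) }"

lemma G_group_RG: "G_group m n r = presented_group (RG m n r)"
  by (simp add: G_group_def RG_def)

lemma Q_group_RQ: "Q_group a = presented_group (RQ a)"
  by (simp add: Q_group_def RQ_def)

lemma cls_wpow: "cls R (wpow g k) = cls R [(g, False)] [^]\<^bsub>presented_group R\<^esub> k"
  using hom_wpow[OF pg_group, of "\<lambda>x. x" R R g k] iso_set_refl[of "presented_group R"]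
  by (simp add: iso_def)

lemma forward_hom:
  assumes "odd m" "a dvd m" "[r = -1] (mod int a)"
  shows "\<exists>h. h \<in> hom (G_group m n r) (Q_group a) \<and> h ` carrier (G_group m n r) = carrier (Q_group a)"
proof -
  let ?Q = "presented_group (RQ a)"
  interpret Q: group ?Q by (rule pg_group)
  define Xe where "Xe = cls (RQ a) [(Gen1, False)]"
  define Ye where "Ye = cls (RQ a) [(Gen2, False)]"
  have Xe: "Xe \<in> carrier ?Q" and Ye: "Ye \<in> carrier ?Q" by (auto simp: Xe_def Ye_def carrier_pg)
  have r1: "Xe [^]\<^bsub>?Q\<^esub> (int a) = Ye [^]\<^bsub>?Q\<^esub> (2::int)"
    using cls_rel[of "wpow Gen1 (int a)" "wpow Gen2 2" "RQ a"]
    by (simp add: RQ_def cls_wpow Xe_def Ye_def)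
  have "cls (RQ a) [(Gen2, False), (Gen1, False), (Gen2, True)] = cls (RQ a) (wpow Gen1 (-1))"
    by (rule cls_rel) (simp add: RQ_def)
  moreover have "cls (RQ a) [(Gen2, False), (Gen1, False), (Gen2, True)] = Ye \<otimes>\<^bsub>?Q\<^esub> Xe \<otimes>\<^bsub>?Q\<^esub> inv\<^bsub>?Q\<^esub> Ye"
    by (simp add: Xe_def Ye_def cls_mult cls_inv)
  ultimately have r2: "Ye \<otimes>\<^bsub>?Q\<^esub> Xe \<otimes>\<^bsub>?Q\<^esub> inv\<^bsub>?Q\<^esub> Ye = inv\<^bsub>?Q\<^esub> Xe"
    using Xe by (simp add: cls_wpow Xe_def[symmetric] Q.int_pow_neg)
  note qr = Q.qrels[OF Xe Ye r1 r2]
  define f where "f = (\<lambda>g. case g of Gen1 \<Rightarrow> Xe [^]\<^bsub>?Q\<^esub> (2::int) | Gen2 \<Rightarrow> Ye)"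
  have f: "\<forall>g. f g \<in> carrier ?Q" using Xe Ye by (auto simp: f_def split: gen2.splits)
  have fXe: "f Gen1 = Xe [^]\<^bsub>?Q\<^esub> (2::int)" and fYe: "f Gen2 = Ye" by (simp_all add: f_def)
  have rel: "evalw ?Q f l = evalw ?Q f r'" if "(l, r') \<in> RG m n r" for l r'
  proof -
    have a1: "Xe [^]\<^bsub>?Q\<^esub> (2 * int m) = \<one>\<^bsub>?Q\<^esub>"
      using Q.pow_period[OF Xe qr(2), of "2 * int m" 0] assms(2) by simp
    have a2: "Ye [^]\<^bsub>?Q\<^esub> (4 * int n) = \<one>\<^bsub>?Q\<^esub>"
      using Q.pow_period[OF Ye qr(3), of "4 * int n" 0] by simp
    have a3: "Xe [^]\<^bsub>?Q\<^esub> (-2::int) = Xe [^]\<^bsub>?Q\<^esub> (2 * r)"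
    proof (rule Q.pow_period[OF Xe qr(2)])
      obtain s where "r - (-1) = int a * s" using assms(3) by (metis cong_iff_dvd_diff dvd_def)
      then have "-2 - 2 * r = 2 * int a * (- s)" by (simp add: algebra_simps)
      then show "2 * int a dvd - 2 - 2 * r" by (metis dvd_triv_left)
    qed
    have a3': "Ye \<otimes>\<^bsub>?Q\<^esub> (Xe [^]\<^bsub>?Q\<^esub> (2::int) \<otimes>\<^bsub>?Q\<^esub> inv\<^bsub>?Q\<^esub> Ye) = Xe [^]\<^bsub>?Q\<^esub> (2 * r)"
      using qr(1)[of 2] a3 Xe Ye by (simp add: Q.m_assoc)
    show ?thesis using that
      by (auto simp: RG_def Q.evalw_wpow[OF f] fXe fYe Q.int_pow_pow[OF Xe] a1 a2 a3' Xe Ye)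
  qed
  define h where "h = uhom (RG m n r) ?Q f"
  have hh: "h \<in> hom (presented_group (RG m n r)) ?Q"
    unfolding h_def by (rule uhom_hom[OF Q.is_group f rel])
  have hc: "h (cls (RG m n r) w) = evalw ?Q f w" for w
    unfolding h_def by (rule uhom_cls[OF Q.is_group f rel])
  interpret gh: group_hom "presented_group (RG m n r)" ?Q h
    using hh pg_group Q.is_group by (simp add: group_hom_def group_hom_axioms_def)
  have Sub: "subgroup (h ` carrier (presented_group (RG m n r))) ?Q" by (rule gh.img_is_subgroup)
  obtain b where b: "a = 2 * b + 1" using assms(1,2) by (metis dvd_trans even_two_times_div_two odd_two_times_div_two_succ dvd_triv_left)
  have "h (cls (RG m n r) (wpow Gen2 2 @ wpow Gen1 (- int b))) = Xe"
  proof -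
    have "h (cls (RG m n r) (wpow Gen2 2 @ wpow Gen1 (- int b)))
        = Ye [^]\<^bsub>?Q\<^esub> (2::int) \<otimes>\<^bsub>?Q\<^esub> Xe [^]\<^bsub>?Q\<^esub> (- 2 * int b)"
      by (simp add: hc Q.evalw_append[OF f] Q.evalw_wpow[OF f] fXe fYe Q.int_pow_pow[OF Xe])
    also have "\<dots> = Xe [^]\<^bsub>?Q\<^esub> (int a + (- 2 * int b))"
      using r1 Q.int_pow_mult[OF Xe, of "int a" "- 2 * int b"] by simp
    also have "\<dots> = Xe"
    proof -
      have "int a + - 2 * int b = 1" using b by simp
      then show ?thesis using Q.int_pow_1[OF Xe] by simp
    qed
    finally show ?thesis .
  qed
  then have "Xe \<in> h ` carrier (presented_group (RG m n r))" by (auto simp: carrier_pg)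
  moreover have "Ye \<in> h ` carrier (presented_group (RG m n r))"
    using hc[of "[(Gen2, False)]"] fYe Ye by (auto simp: carrier_pg intro!: image_eqI[of _ _ "cls (RG m n r) [(Gen2, False)]"])
  ultimately have gen: "cls (RQ a) [(g, False)] \<in> h ` carrier (presented_group (RG m n r))" for g
    by (cases g) (auto simp: Xe_def Ye_def)
  have "h ` carrier (presented_group (RG m n r)) = carrier ?Q"
  proof
    show "h ` carrier (presented_group (RG m n r)) \<subseteq> carrier ?Q" using gh.hom_closed by auto
    show "carrier ?Q \<subseteq> h ` carrier (presented_group (RG m n r))"
      using pg_generated[OF Sub gen] by (auto simp: carrier_pg)
  qed
  then show ?thesis using hh unfolding G_group_RG Q_group_RQ by blast
qed

lemma forward:
  assumes "odd m" "a dvd m" "[r = -1] (mod int a)"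
  shows "\<exists>N. N \<lhd> G_group m n r \<and> G_group m n r Mod N \<cong> Q_group a"
proof -
  obtain h where h: "h \<in> hom (G_group m n r) (Q_group a)" "h ` carrier (G_group m n r) = carrier (Q_group a)"
    using forward_hom[OF assms] by blast
  interpret gh: group_hom "G_group m n r" "Q_group a" h
    using h by (simp add: group_hom_def group_hom_axioms_def G_group_RG Q_group_RQ pg_group)
  show ?thesis using gh.normal_kernel gh.FactGroup_iso[OF h(2)] by blast
qed

definition Dih :: "nat \<Rightarrow> (int \<times> bool) monoid" where
  "Dih a = \<lparr> carrier = {0..<int a} \<times> UNIV,
     monoid.mult = (\<lambda>x y. ((if snd x then fst x - fst y else fst x + fst y) mod int a, snd x \<noteq> snd y)),
     one = (0, False) \<rparr>"

lemma Dih_carrier: "carrier (Dih a) = {0..<int a} \<times> UNIV" by (simp add: Dih_def)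
lemma Dih_one: "\<one>\<^bsub>Dih a\<^esub> = (0, False)" by (simp add: Dih_def)
lemma Dih_mult: "(i, j) \<otimes>\<^bsub>Dih a\<^esub> (k, l) = ((if j then i - k else i + k) mod int a, j \<noteq> l)"
  by (simp add: Dih_def)

lemma Dih_group: assumes "a \<ge> 1" shows "group (Dih a)"
proof (rule groupI)
  fix x y assume "x \<in> carrier (Dih a)" "y \<in> carrier (Dih a)"
  then show "x \<otimes>\<^bsub>Dih a\<^esub> y \<in> carrier (Dih a)" using assms
    by (cases x, cases y) (simp add: Dih_carrier Dih_mult)
next
  show "\<one>\<^bsub>Dih a\<^esub> \<in> carrier (Dih a)" using assms by (simp add: Dih_carrier Dih_one)
next
  fix x y z assume "x \<in> carrier (Dih a)" "y \<in> carrier (Dih a)" "z \<in> carrier (Dih a)"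
  obtain i j k l p q where x: "x = (i, j)" and y: "y = (k, l)" and z: "z = (p, q)"
    by (metis prod.exhaust)
  show "x \<otimes>\<^bsub>Dih a\<^esub> y \<otimes>\<^bsub>Dih a\<^esub> z = x \<otimes>\<^bsub>Dih a\<^esub> (y \<otimes>\<^bsub>Dih a\<^esub> z)"
    unfolding x y z Dih_mult
    by (cases j; cases l) (simp_all add: mod_simps algebra_simps)
next
  fix x assume "x \<in> carrier (Dih a)"
  then show "\<one>\<^bsub>Dih a\<^esub> \<otimes>\<^bsub>Dih a\<^esub> x = x"
    by (cases x) (simp add: Dih_carrier Dih_mult Dih_one)
next
  fix x assume x: "x \<in> carrier (Dih a)"
  obtain i j where xi: "x = (i, j)" by (metis prod.exhaust)
  show "\<exists>y\<in>carrier (Dih a). y \<otimes>\<^bsub>Dih a\<^esub> x = \<one>\<^bsub>Dih a\<^esub>"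
  proof (cases j)
    case True
    then show ?thesis using x by (intro bexI[of _ "(i, True)"]) (auto simp: xi Dih_carrier Dih_mult Dih_one)
  next
    case False
    then show ?thesis using x assms
      by (intro bexI[of _ "((- i) mod int a, False)"]) (auto simp: xi Dih_carrier Dih_mult Dih_one mod_simps)
  qed
qed

context
  fixes a :: nat
  assumes a1: "a \<ge> 1"
begin

interpretation D: group "Dih a" by (rule Dih_group[OF a1])

lemma Dih_inv_F: "0 \<le> k \<Longrightarrow> k < int a \<Longrightarrow> inv\<^bsub>Dih a\<^esub> (k, False) = ((- k) mod int a, False)"
proof (rule D.inv_equality)
  show "((- k) mod int a, False) \<otimes>\<^bsub>Dih a\<^esub> (k, False) = \<one>\<^bsub>Dih a\<^esub>"
    by (simp add: Dih_mult Dih_one mod_add_left_eq)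
qed (use a1 in \<open>auto simp: Dih_carrier\<close>)

lemma Dih_inv_T: "0 \<le> k \<Longrightarrow> k < int a \<Longrightarrow> inv\<^bsub>Dih a\<^esub> (k, True) = (k, True)"
proof (rule D.inv_equality)
  show "(k, True) \<otimes>\<^bsub>Dih a\<^esub> (k, True) = \<one>\<^bsub>Dih a\<^esub>"
    by (simp add: Dih_mult Dih_one)
qed (auto simp: Dih_carrier)

lemma Dih_pow_F: "(k, False) [^]\<^bsub>Dih a\<^esub> (n::nat) = ((int n * k) mod int a, False)"
proof (induction n)
  case 0 then show ?case by (simp add: Dih_one)
next
  case (Suc n)
  have "(k, False) [^]\<^bsub>Dih a\<^esub> Suc n = ((int n * k) mod int a, False) \<otimes>\<^bsub>Dih a\<^esub> (k, False)"
    using Suc.IH by simp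
  also have "\<dots> = ((int n * k + k) mod int a, False)" by (simp add: Dih_mult mod_add_left_eq)
  also have "int n * k + k = int (Suc n) * k" by (simp add: distrib_right)
  finally show ?case .
qed

lemma Dih_pow_T: "0 \<le> k \<Longrightarrow> k < int a \<Longrightarrow> (k, True) [^]\<^bsub>Dih a\<^esub> (n::nat) = (if even n then (0, False) else (k, True))"
  by (induction n) (auto simp: Dih_mult Dih_one)

lemma Dih_ipow_F: "0 \<le> k \<Longrightarrow> k < int a \<Longrightarrow> (k, False) [^]\<^bsub>Dih a\<^esub> (z::int) = ((z * k) mod int a, False)"
proof (cases "z < 0")
  case True
  assume k: "0 \<le> k" "k < int a"
  have "(k, False) [^]\<^bsub>Dih a\<^esub> z = inv\<^bsub>Dih a\<^esub> ((int (nat (- z)) * k) mod int a, False)"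
    using True by (simp add: int_pow_def2 Dih_pow_F)
  also have "\<dots> = ((- ((int (nat (- z)) * k) mod int a)) mod int a, False)"
    by (rule Dih_inv_F) (use a1 in auto)
  also have "\<dots> = ((z * k) mod int a, False)" using True by (simp add: mod_minus_eq)
  finally show ?thesis .
next
  case False
  then show ?thesis by (simp add: int_pow_def2 Dih_pow_F)
qed

lemma dvd_mod_shift: "(g::int) dvd int a \<Longrightarrow> g dvd (x mod int a - c) \<longleftrightarrow> g dvd (x - c)"
proof -
  assume g: "g dvd int a"
  have "x mod int a - c = (x - c) + int a * (- (x div int a))"
    by (simp add: algebra_simps minus_div_mult_eq_mod[symmetric])
  moreover have "g dvd int a * (- (x div int a))" using g by simp
  ultimately show ?thesis by (metis dvd_add_left_iff)
qed

lemma conv_core: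
  assumes om: "odd m"
    and psi: "\<psi> \<in> hom (presented_group (RG m n r)) (Dih a)"
    and s1: "(1, False) \<in> \<psi> ` carrier (presented_group (RG m n r))"
    and s2: "(0, True) \<in> \<psi> ` carrier (presented_group (RG m n r))"
  shows "a dvd m \<and> [r = -1] (mod int a)"
proof -
  define f where "f = (\<lambda>g. \<psi> (cls (RG m n r) [(g, False)]))"
  have fc: "\<forall>g. f g \<in> carrier (Dih a)"
    using psi by (auto simp: f_def hom_def carrier_pg)
  have hc: "\<psi> (cls (RG m n r) w) = evalw (Dih a) f w" for w
    unfolding f_def by (rule hom_cls[OF D.is_group psi])
  have hw: "\<psi> (cls (RG m n r) (wpow g k)) = f g [^]\<^bsub>Dih a\<^esub> k" for g k
    unfolding f_def by (rule hom_wpow[OF D.is_group psi])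
  obtain k b where U: "f Gen1 = (k, b)" by (metis prod.exhaust)
  obtain c b' where W: "f Gen2 = (c, b')" by (metis prod.exhaust)
  have kr: "0 \<le> k" "k < int a" using fc[rule_format, of Gen1] U by (simp_all add: Dih_carrier)
  have cr: "0 \<le> c" "c < int a" using fc[rule_format, of Gen2] W by (simp_all add: Dih_carrier)
  have rel1: "f Gen1 [^]\<^bsub>Dih a\<^esub> (int m) = (0, False)"
  proof -
    have "cls (RG m n r) (wpow Gen1 (int m)) = cls (RG m n r) []" by (rule cls_rel) (simp add: RG_def)
    then have "\<psi> (cls (RG m n r) (wpow Gen1 (int m))) = \<psi> (cls (RG m n r) [])" by simp
    then show ?thesis unfolding hw hc[of "[]"] by (simp add: Dih_one)
  qed
  have rel3: "evalw (Dih a) f [(Gen2, False), (Gen1, False), (Gen2, True)] = f Gen1 [^]\<^bsub>Dih a\<^esub> r"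
  proof -
    have "cls (RG m n r) [(Gen2, False), (Gen1, False), (Gen2, True)] = cls (RG m n r) (wpow Gen1 r)"
      by (rule cls_rel) (simp add: RG_def)
    then have "\<psi> (cls (RG m n r) [(Gen2, False), (Gen1, False), (Gen2, True)]) = \<psi> (cls (RG m n r) (wpow Gen1 r))"
      by simp
    then show ?thesis unfolding hw hc[of "[(Gen2, False), (Gen1, False), (Gen2, True)]"] .
  qed
  have b: "\<not> b"
  proof
    assume b: b
    have "f Gen1 [^]\<^bsub>Dih a\<^esub> (int m) = (k, True) [^]\<^bsub>Dih a\<^esub> m"
      using b by (simp only: U int_pow_int)
    also have "\<dots> = (k, True)" using om by (simp only: Dih_pow_T[OF kr] if_False)
    finally have "f Gen1 [^]\<^bsub>Dih a\<^esub> (int m) = (k, True)" .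
    then show False using rel1 by simp
  qed
  have b': "b'"
  proof (rule ccontr)
    assume nb: "\<not> b'"
    have "snd (evalw (Dih a) f w) = False" for w
    proof (induction w)
      case Nil then show ?case by (simp add: Dih_one)
    next
      case (Cons x w)
      obtain g e where x: "x = (g, e)" by (metis prod.exhaust)
      have "snd (if e then inv\<^bsub>Dih a\<^esub> (f g) else f g) = False"
        using U W b nb kr cr by (cases g; cases e) (simp_all add: Dih_inv_F)
      obtain i j where ij: "evalw (Dih a) f w = (i, j)" by (metis prod.exhaust)
      obtain i' j' where ij': "(if e then inv\<^bsub>Dih a\<^esub> (f g) else f g) = (i', j')" by (metis prod.exhaust)
      show ?case using Cons ij ij' \<open>snd (if e then inv\<^bsub>Dih a\<^esub> (f g) else f g) = False\<close>
        by (simp add: x Dih_mult)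
    qed
    moreover obtain x where "x \<in> carrier (presented_group (RG m n r))" "\<psi> x = (0, True)" using s2 by auto
    then obtain w where "\<psi> (cls (RG m n r) w) = (0, True)" by (auto simp: carrier_pg)
    ultimately show False using hc by (metis snd_conv)
  qed
  define gg where "gg = gcd k (int a)"
  have gga: "gg dvd int a" and ggk: "gg dvd k" by (simp_all add: gg_def)
  have inv: "gg dvd (fst (evalw (Dih a) f w) - (if snd (evalw (Dih a) f w) then c else 0))" for w
  proof (induction w)
    case Nil then show ?case by (simp add: Dih_one)
  next
    case (Cons x w)
    obtain g e where x: "x = (g, e)" by (metis prod.exhaust)
    obtain i j where ij: "evalw (Dih a) f w = (i, j)" by (metis prod.exhaust)
    have IH: "gg dvd (i - (if j then c else 0))" using Cons ij by simp
    have "gg dvd fst ((if e then inv\<^bsub>Dih a\<^esub> (f g) else f g) \<otimes>\<^bsub>Dih a\<^esub> (i, j))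
       - (if snd ((if e then inv\<^bsub>Dih a\<^esub> (f g) else f g) \<otimes>\<^bsub>Dih a\<^esub> (i, j)) then c else 0)"
    proof (cases g)
      case Gen1
      have l: "(if e then inv\<^bsub>Dih a\<^esub> (f g) else f g) = (if e then (- k) mod int a else k, False)"
        using Gen1 U b kr by (simp add: Dih_inv_F)
      have "gg dvd (if e then (- k) mod int a else k)"
        using ggk gga by (auto simp: dvd_mod_iff)
      then have "gg dvd (if e then (- k) mod int a else k) + (i - (if j then c else 0))"
        using IH by simp
      then show ?thesis unfolding l Dih_mult
        by (simp add: dvd_mod_shift[OF gga] dvd_mod_iff[OF gga] algebra_simps)
    next
      case Gen2
      have l: "(if e then inv\<^bsub>Dih a\<^esub> (f g) else f g) = (c, True)"
        using Gen2 W b' cr by (simp add: Dih_inv_T)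
      show ?thesis
      proof (cases j)
        case True
        then have "gg dvd - (i - c)" using IH by (simp only: dvd_minus_iff if_True)
        then show ?thesis using True unfolding l Dih_mult by (simp add: dvd_mod_shift[OF gga] dvd_mod_iff[OF gga] algebra_simps)
      next
        case False
        then have "gg dvd - i" using IH by (simp only: dvd_minus_iff if_False diff_0_right)
        then show ?thesis using False unfolding l Dih_mult
          by (simp add: dvd_mod_shift[OF gga] dvd_mod_iff[OF gga] algebra_simps)
      qed
    qed
    then show ?case using ij x by simp
  qed
  obtain x where "x \<in> carrier (presented_group (RG m n r))" "\<psi> x = (1, False)" using s1 by auto
  then obtain w where "\<psi> (cls (RG m n r) w) = (1, False)" by (auto simp: carrier_pg)
  then have "gg dvd 1" using inv[of w] hc by simp
  then have cop: "coprime (int a) k" by (simp add: gg_def coprime_iff_gcd_eq_1 gcd.commute)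
  have "((int m * k) mod int a, False) = (0, False)"
    using rel1 by (simp add: U b Dih_ipow_F kr)
  then have "int a dvd int m * k" by (simp add: mod_eq_0_iff_dvd)
  then have "int a dvd int m" using cop by (simp add: coprime_dvd_mult_left_iff)
  then have am: "a dvd m" by simp
  have "evalw (Dih a) f [(Gen2, False), (Gen1, False), (Gen2, True)] = ((- k) mod int a, False)"
    using U W b b' kr cr by (simp add: Dih_inv_T Dih_mult Dih_one mod_diff_right_eq)
  then have "((- k) mod int a) = (r * k) mod int a"
    using rel3 by (simp add: U b Dih_ipow_F kr)
  then have "int a dvd (- k) - r * k" by (simp add: mod_eq_dvd_iff)
  moreover have "(- k) - r * k = - ((r + 1) * k)" by (simp add: algebra_simps)
  ultimately have "int a dvd (r + 1) * k" by simp
  then have "int a dvd r + 1" using cop by (simp add: coprime_dvd_mult_left_iff)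
  then have "[r = -1] (mod int a)" by (simp add: cong_iff_dvd_diff)
  with am show ?thesis by simp
qed

end

lemma converse:
  assumes a2: "a \<ge> 2" and om: "odd m"
    and N: "N \<lhd> G_group m n r" and iso: "G_group m n r Mod N \<cong> Q_group a"
  shows "a dvd m \<and> [r = -1] (mod int a)"
proof -
  have a1: "a \<ge> 1" using a2 by simp
  interpret D: group "Dih a" by (rule Dih_group[OF a1])
  let ?G = "presented_group (RG m n r)"
  let ?Q = "presented_group (RQ a)"
  obtain \<phi> where phi: "\<phi> \<in> iso (?G Mod N) ?Q"
    using iso by (auto simp: is_iso_def G_group_RG Q_group_RQ)
  interpret NN: normal N ?G using N by (simp add: G_group_RG)
  have pi: "(\<lambda>x. N #>\<^bsub>?G\<^esub> x) \<in> hom ?G (?G Mod N)" by (rule NN.r_coset_hom_Mod)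
  have pis: "(\<lambda>x. N #>\<^bsub>?G\<^esub> x) ` carrier ?G = carrier (?G Mod N)"
    by (auto simp: FactGroup_def RCOSETS_def)
  have phis: "\<phi> ` carrier (?G Mod N) = carrier ?Q" using phi by (simp add: iso_def bij_betw_def)
  define fD where "fD = (\<lambda>g. case g of Gen1 \<Rightarrow> (1::int, False) | Gen2 \<Rightarrow> (0, True))"
  have fD: "\<forall>g. fD g \<in> carrier (Dih a)" using a2 by (auto simp: fD_def Dih_carrier split: gen2.splits)
  have fD1: "fD Gen1 = (1, False)" and fD2: "fD Gen2 = (0, True)" by (simp_all add: fD_def)
  have rel: "evalw (Dih a) fD l = evalw (Dih a) fD r'" if "(l, r') \<in> RQ a" for l r'
  proof -
    have e1: "evalw (Dih a) fD (wpow Gen1 (int a)) = evalw (Dih a) fD (wpow Gen2 2)"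
    proof -
      have "evalw (Dih a) fD (wpow Gen1 (int a)) = (0, False)"
        using a2 by (simp add: D.evalw_wpow[OF fD] fD1 Dih_ipow_F[OF a1])
      moreover have "evalw (Dih a) fD (wpow Gen2 2) = (0, False)"
      proof -
        have "evalw (Dih a) fD (wpow Gen2 2) = (0, True) [^]\<^bsub>Dih a\<^esub> (2::nat)"
          using int_pow_int[of "Dih a" "(0::int, True)" 2] by (simp add: D.evalw_wpow[OF fD] fD2)
        also have "\<dots> = (0, False)" using a2 by (simp add: Dih_pow_T[OF a1])
        finally show ?thesis .
      qed
      ultimately show ?thesis by simp
    qed
    have e2: "evalw (Dih a) fD [(Gen2, False), (Gen1, False), (Gen2, True)] = evalw (Dih a) fD (wpow Gen1 (-1))"
    proof -
      have "evalw (Dih a) fD [(Gen2, False), (Gen1, False), (Gen2, True)] = ((-1) mod int a, False)"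
        using a2 by (simp add: fD1 fD2 Dih_inv_T[OF a1] Dih_mult Dih_one)
      moreover have "evalw (Dih a) fD (wpow Gen1 (-1)) = ((-1) mod int a, False)"
        using a2 by (simp add: D.evalw_wpow[OF fD] fD1 Dih_ipow_F[OF a1])
      ultimately show ?thesis by simp
    qed
    show ?thesis using that e1 e2 by (auto simp: RQ_def)
  qed
  define \<chi> where "\<chi> = uhom (RQ a) (Dih a) fD"
  have chi: "\<chi> \<in> hom ?Q (Dih a)" unfolding \<chi>_def by (rule uhom_hom[OF D.is_group fD rel])
  have chic: "\<chi> (cls (RQ a) w) = evalw (Dih a) fD w" for w
    unfolding \<chi>_def by (rule uhom_cls[OF D.is_group fD rel])
  define \<psi> where "\<psi> = \<chi> \<circ> \<phi> \<circ> (\<lambda>x. N #>\<^bsub>?G\<^esub> x)"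
  have psi: "\<psi> \<in> hom ?G (Dih a)"
    unfolding \<psi>_def using phi pi chi by (meson hom_compose iso_imp_homomorphism)
  have img: "\<psi> ` carrier ?G = \<chi> ` carrier ?Q"
    unfolding \<psi>_def image_comp[symmetric] pis phis ..
  have "(1, False) = \<chi> (cls (RQ a) [(Gen1, False)])" using a2 by (simp add: chic fD1 Dih_mult Dih_one)
  then have s1: "(1, False) \<in> \<psi> ` carrier ?G" unfolding img by (auto simp: carrier_pg)
  have "(0, True) = \<chi> (cls (RQ a) [(Gen2, False)])" using a2 by (simp add: chic fD2 Dih_mult Dih_one)
  then have s2: "(0, True) \<in> \<psi> ` carrier ?G" unfolding img by (auto simp: carrier_pg)
  show ?thesis by (rule conv_core[OF a1 om psi s1 s2])
qed

theorem lemma1p6: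
  fixes m n a :: nat and r :: int
  assumes "m \<ge> 1" and "odd m" and "n \<ge> 1" and "gcd m (4 * n) = 1"
    and "[r ^ (4 * n) = 1] (mod int m)"
    and "a \<ge> 2"
  shows "(\<exists>N. N \<lhd> G_group m n r \<and> G_group m n r Mod N \<cong> Q_group a)
         \<longleftrightarrow> (a dvd m \<and> [r = -1] (mod int a))"
  using converse[OF assms(6) assms(2)] forward[OF assms(2)] by blast

end
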